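(* Let $F\colon\mathbb{R}^{n\times m}\to\mathbb{R}$ be continuous with $|F(X)|\le C(|X|^p+1)$ for some $C\in(0,\infty)$ and all $X$. Then either $\mathcal{Q}F\equiv-\infty$, or $\mathcal{Q}F$ is real-valued everywhere and satisfies $|\mathcal{Q}F(X)|\le C'(|X|^p+1)$ for all $X$, for some constant $C'$.
   Context: Fix integers $N,n\ge1$, a vector $\mathbf a=(a_1,\dots,a_N)$ of positive integers and $p\in(1,\infty)$. $\langle\alpha,\mathbf a^{-1}\rangle=\sum_j\alpha_j/a_j$ for $\alpha\in\mathbb{Z}_{\ge0}^N$; $m$ is the number of $\alpha$ with $\langle\alpha,\mathbf a^{-1}\rangle=1$. For smooth $u$, $\nabla_{\mathbf a}u=(\partial^\alpha u)_{\langle\alpha,\mathbf a^{-1}\rangle=1}\in\mathbb{R}^{n\times m}$. $Q=(-1,1)^N$. $\mathcal{Q}F(V)=\inf\{\frac1{|Q|}\int_QF(V+\nabla_{\mathbf a}u)\,\mathrm{d}x:u\in C_c^\infty(Q;\mathbb{R}^n)\}$. *)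

theory Defs
  imports "HOL-Analysis.Analysis"
begin

definition partial_dir :: "'N::finite \<Rightarrow> (real^'N \<Rightarrow> real) \<Rightarrow> real^'N \<Rightarrow> real" where
  "partial_dir j f = (\<lambda>x. frechet_derivative f (at x) (axis j 1))"

definition partials :: "'N::finite list \<Rightarrow> (real^'N \<Rightarrow> real) \<Rightarrow> real^'N \<Rightarrow> real" where
  "partials js f = foldr partial_dir js f"

definition smooth_fun :: "(real^'N::finite \<Rightarrow> real) \<Rightarrow> bool" where
  "smooth_fun f \<longleftrightarrow> (\<forall>js. partials js f differentiable_on UNIV)"

text \<open>Multi-index partial derivative \<partial>^\<alpha>: differentiate \<alpha> j times in direction j
  (the order is irrelevant for smooth functions by Schwarz's theorem).\<close>
definition mpartial :: "('N::finite \<Rightarrow> nat) \<Rightarrow> (real^'N \<Rightarrow> real) \<Rightarrow> real^'N \<Rightarrow> real" where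
  "mpartial \<alpha> f = partials (SOME js. \<forall>j. count_list js j = \<alpha> j) f"

definition cubeQ :: "(real^'N::finite) set" where
  "cubeQ = box (-1) 1"

definition Cc_inf :: "(real^'N::finite \<Rightarrow> real^'n::finite) set" where
  "Cc_inf = {u. (\<forall>i. smooth_fun (\<lambda>x. u x $ i)) \<and> closure {x. u x \<noteq> 0} \<subseteq> cubeQ}"

definition aidx :: "('N::finite \<Rightarrow> nat) \<Rightarrow> ('N \<Rightarrow> nat) set" where
  "aidx a = {\<alpha>. (\<Sum>j\<in>UNIV. real (\<alpha> j) / real (a j)) = 1}"

text \<open>The anisotropic gradient \<nabla>_a u, an n x m matrix; the m columns are indexed by the finite
  type 'm via an enumeration idx of the multi-indices in aidx a.\<close>
definition grad_a :: "('m::finite \<Rightarrow> ('N::finite \<Rightarrow> nat)) \<Rightarrow> (real^'N \<Rightarrow> real^'n::finite)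
    \<Rightarrow> real^'N \<Rightarrow> real^'m^'n" where
  "grad_a idx u x = (\<chi> i. \<chi> k. mpartial (idx k) (\<lambda>y. u y $ i) x)"

definition QF :: "('m::finite \<Rightarrow> ('N::finite \<Rightarrow> nat)) \<Rightarrow> (real^'m^'n::finite \<Rightarrow> real)
    \<Rightarrow> real^'m^'n \<Rightarrow> ereal" where
  "QF idx F V = (INF u\<in>(Cc_inf :: (real^'N \<Rightarrow> real^'n) set).
      ereal ((1 / measure lborel (cubeQ :: (real^'N) set)) *
             (LINT x:cubeQ|lborel. F (V + grad_a idx u x))))"

end

theory Submission
  imports Defs "HOL-Computational_Algebra.Polynomial"
begin

lemma partials_Nil[simp]: "partials [] f = f"
  by (simp add: partials_def)
lemma partials_Cons[simp]: "partials (j#js) f = partial_dir j (partials js f)"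
  by (simp add: partials_def)

lemma partial_dir_at:
  assumes "(f has_derivative f') (at x)"
  shows "partial_dir j f x = f' (axis j 1)"
  using frechet_derivative_at[OF assms] by (simp add: partial_dir_def)

lemma partial_dir_local:
  assumes "open U" "x \<in> U" "\<And>y. y \<in> U \<Longrightarrow> f y = g y"
  shows "partial_dir j f x = partial_dir j g x"
proof -
  have "(f has_derivative D) (at x) \<longleftrightarrow> (g has_derivative D) (at x)" for D
    using has_derivative_transform_within_open[OF _ assms(1,2), of f D UNIV g]
      has_derivative_transform_within_open[OF _ assms(1,2), of g D UNIV f] assms(3) by auto
  then show ?thesis by (simp add: partial_dir_def frechet_derivative_def)
qed

lemma partials_local:
  assumes "open U" "\<And>y. y \<in> U \<Longrightarrow> f y = g y"
  shows "x \<in> U \<Longrightarrow> partials js f x = partials js g x"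
proof (induction js arbitrary: x)
  case Nil then show ?case using assms by simp
next
  case (Cons j js) then show ?case
    using partial_dir_local[OF assms(1), of x "partials js f" "partials js g"] by simp
qed

lemma partials_zero: "partials js (\<lambda>x. 0) = (\<lambda>x. 0)"
proof (induction js)
  case (Cons j js)
  have "partial_dir j (\<lambda>x::real^'a. 0::real) x = 0" for x
    using partial_dir_at[of "\<lambda>x::real^'a. 0::real" "\<lambda>_. 0" x j] by simp
  then show ?case by (simp add: Cons.IH fun_eq_iff)
qed simp

fun PP :: "nat \<Rightarrow> real poly" where
  "PP 0 = 1"
| "PP (Suc k) = [:0,0,1:] * (PP k - pderiv (PP k))"

definition HH :: "nat \<Rightarrow> real \<Rightarrow> real" where
  "HH k t = (if t > 0 then poly (PP k) (1/t) * exp (-1/t) else 0)"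

lemma poly_exp_lim: "((\<lambda>y. poly Q y * exp (-y)) \<longlongrightarrow> (0::real)) at_top"
proof -
  have "((\<lambda>y. \<Sum>i\<le>degree Q. coeff Q i * (y ^ i / exp y)) \<longlongrightarrow> (\<Sum>i\<le>degree Q. coeff Q i * 0)) at_top"
    by (intro tendsto_intros tendsto_power_div_exp_0)
  moreover have "poly Q y * exp (-y) = (\<Sum>i\<le>degree Q. coeff Q i * (y ^ i / exp y))" for y
  proof -
    have "(\<Sum>i\<le>degree Q. coeff Q i * (y ^ i / exp y)) = (\<Sum>i\<le>degree Q. coeff Q i * y ^ i) / exp y"
      by (simp add: sum_divide_distrib)
    then show ?thesis by (simp add: poly_altdef exp_minus divide_inverse)
  qed
  ultimately show ?thesis by simp
qed

lemma HH_right_lim: "((\<lambda>s. HH k s / s) \<longlongrightarrow> 0) (at_right 0)"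
proof -
  have lim: "((\<lambda>s. poly ([:0,1:] * PP k) (inverse s) * exp (- inverse s)) \<longlongrightarrow> (0::real)) (at_right 0)"
    by (rule filterlim_compose[OF poly_exp_lim filterlim_inverse_at_top_right])
  have ev: "\<forall>\<^sub>F s in at_right 0. poly ([:0,1:] * PP k) (inverse s) * exp (- inverse s) = HH k s / s"
  proof (rule eventually_at_rightI[of 0 1])
    fix s :: real assume "s \<in> {0<..<1}"
    then show "poly ([:0,1:] * PP k) (inverse s) * exp (- inverse s) = HH k s / s"
      by (simp add: HH_def divide_inverse mult_ac)
  qed simp
  show ?thesis using tendsto_cong[OF ev] lim by simp
qed

lemma HH_deriv: "(HH k has_real_derivative HH (Suc k) t) (at t)"
proof (cases "t > 0")
  case True
  have d: "((\<lambda>s. poly (PP k) (1/s) * exp (-1/s)) has_real_derivative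
      poly (PP k) (1/t) * (exp (-1/t) * (1/t^2)) + poly (pderiv (PP k)) (1/t) * (- 1/t^2) * exp (-1/t)) (at t)"
    using True
    by (auto intro!: derivative_eq_intros simp: power2_eq_square field_simps)
  have e1: "HH (Suc k) t = (1/t)^2 * (poly (PP k) (1/t) - poly (pderiv (PP k)) (1/t)) * exp (-1/t)"
    using True by (simp add: HH_def power2_eq_square algebra_simps)
  have e2: "(1/t)^2 * (poly (PP k) (1/t) - poly (pderiv (PP k)) (1/t)) * exp (-1/t) = poly (PP k) (1/t) * (exp (-1/t) * (1/t^2)) + poly (pderiv (PP k)) (1/t) * (- 1/t^2) * exp (-1/t)"
    using True by (simp add: field_simps power2_eq_square)
  have "HH (Suc k) t = poly (PP k) (1/t) * (exp (-1/t) * (1/t^2)) + poly (pderiv (PP k)) (1/t) * (- 1/t^2) * exp (-1/t)"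
    using e1 e2 by simp
  then have d2: "((\<lambda>s. poly (PP k) (1/s) * exp (-1/s)) has_real_derivative HH (Suc k) t) (at t)"
    using d by simp
  show ?thesis
    by (rule has_field_derivative_transform_within_open[OF d2, of "{0<..}"]) (use True in \<open>auto simp: HH_def\<close>)
next
  case False
  show ?thesis
  proof (cases "t < 0")
    case True
    have "((\<lambda>s. 0) has_real_derivative 0) (at t)" by simp
    then have "(HH k has_real_derivative 0) (at t)"
      by (rule has_field_derivative_transform_within_open[of _ _ _ "{..<0}"]) (use True in \<open>auto simp: HH_def\<close>)
    moreover have "HH (Suc k) t = 0" using True by (simp add: HH_def)
    ultimately show ?thesis by simp
  next
    case False
    with \<open>\<not> t > 0\<close> have t: "t = 0" by simp
    have "((\<lambda>s. (HH k s - HH k 0) / (s - 0)) \<longlongrightarrow> 0) (at 0)"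
      unfolding filterlim_at_split
    proof
      show "((\<lambda>s. (HH k s - HH k 0) / (s - 0)) \<longlongrightarrow> 0) (at_left 0)"
      proof (rule tendsto_eventually)
        show "\<forall>\<^sub>F s in at_left 0. (HH k s - HH k 0) / (s - 0) = 0"
          by (rule eventually_at_leftI[of "-1"]) (auto simp: HH_def)
      qed
      show "((\<lambda>s. (HH k s - HH k 0) / (s - 0)) \<longlongrightarrow> 0) (at_right 0)"
        using HH_right_lim by (simp add: HH_def)
    qed
    then show ?thesis using t by (simp add: has_field_derivative_iff HH_def)
  qed
qed

inductive_set alg :: "(real^'N::finite \<Rightarrow> real) set" where
  Const: "(\<lambda>x. c) \<in> alg"
| Coord: "(\<lambda>x. x$i) \<in> alg"
| HF: "(\<lambda>x. HH k (c + d * x$i)) \<in> alg"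
| Add: "f \<in> alg \<Longrightarrow> g \<in> alg \<Longrightarrow> (\<lambda>x. f x + g x) \<in> alg"
| Mul: "f \<in> alg \<Longrightarrow> g \<in> alg \<Longrightarrow> (\<lambda>x. f x * g x) \<in> alg"
| Inv: "f \<in> alg \<Longrightarrow> (\<forall>x. f x \<noteq> 0) \<Longrightarrow> (\<lambda>x. inverse (f x)) \<in> alg"

lemma alg_props:
  assumes "f \<in> alg"
  shows "(\<forall>x. f differentiable (at x)) \<and> (\<forall>j. partial_dir j f \<in> alg)"
  using assms
proof induction
  case (Const c)
  have "partial_dir j (\<lambda>x::real^'a. c) = (\<lambda>x. 0)" for j
    using partial_dir_at[of "\<lambda>x::real^'a. c" "\<lambda>_. 0"] by (auto simp: fun_eq_iff)
  then show ?case by (auto intro: alg.Const)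
next
  case (Coord i)
  have d: "((\<lambda>x::real^'a. x$i) has_derivative (\<lambda>v. v$i)) (at x)" for x
    by (rule bounded_linear_imp_has_derivative) (rule bounded_linear_vec_nth)
  have "partial_dir j (\<lambda>x::real^'a. x$i) = (\<lambda>x. (if j = i then 1 else 0))" for j
    using partial_dir_at[OF d] by (auto simp: fun_eq_iff axis_def)
  then show ?case using d by (auto intro: alg.Const differentiableI)
next
  case (HF k c d i)
  have d: "((\<lambda>x::real^'a. HH k (c + d * x$i)) has_derivative (\<lambda>v. HH (Suc k) (c + d * x$i) * (d * v$i))) (at x)" for x
  proof -
    have 0: "((\<lambda>x::real^'a. x$i) has_derivative (\<lambda>v. v$i)) (at x)"
      by (rule bounded_linear_imp_has_derivative) (rule bounded_linear_vec_nth)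
    have 1: "((\<lambda>x::real^'a. c + d * x$i) has_derivative (\<lambda>v. 0 + d * v$i)) (at x)"
      by (rule has_derivative_add[OF has_derivative_const has_derivative_mult_right[OF 0]])
    have 2: "(HH k has_derivative (\<lambda>h. HH (Suc k) (c + d * x$i) * h)) (at (c + d * x$i))"
      using HH_deriv[of k "c + d * x$i"] by (simp add: has_field_derivative_def)
    show ?thesis using has_derivative_compose[OF 1 2] by simp
  qed
  have "partial_dir j (\<lambda>x::real^'a. HH k (c + d * x$i)) = (\<lambda>x. (if j = i then d else 0) * HH (Suc k) (c + d * x$i))" for j
    using partial_dir_at[OF d] by (auto simp: fun_eq_iff axis_def)
  then show ?case using d by (auto intro!: alg.Const alg.Mul alg.HF differentiableI)
next
  case (Add f g)
  then obtain f' g' where df: "\<And>x. (f has_derivative f' x) (at x)" and dg: "\<And>x. (g has_derivative g' x) (at x)"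
    unfolding differentiable_def by metis
  have "partial_dir j (\<lambda>x. f x + g x) = (\<lambda>x. partial_dir j f x + partial_dir j g x)" for j
    using partial_dir_at[OF has_derivative_add[OF df dg]] partial_dir_at[OF df] partial_dir_at[OF dg]
    by (auto simp: fun_eq_iff)
  then show ?case using Add has_derivative_add[OF df dg] by (auto intro!: alg.Add differentiableI)
next
  case (Mul f g)
  then obtain f' g' where df: "\<And>x. (f has_derivative f' x) (at x)" and dg: "\<And>x. (g has_derivative g' x) (at x)"
    unfolding differentiable_def by metis
  have "partial_dir j (\<lambda>x. f x * g x) = (\<lambda>x. f x * partial_dir j g x + partial_dir j f x * g x)" for j
    using partial_dir_at[OF has_derivative_mult[OF df dg]] partial_dir_at[OF df] partial_dir_at[OF dg]
    by (auto simp: fun_eq_iff)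
  then show ?case using Mul has_derivative_mult[OF df dg] by (auto intro!: alg.Add alg.Mul differentiableI)
next
  case (Inv f)
  then obtain f' where df: "\<And>x. (f has_derivative f' x) (at x)"
    unfolding differentiable_def by metis
  have di: "((\<lambda>x. inverse (f x)) has_derivative (\<lambda>h. - (inverse (f x) * f' x h * inverse (f x)))) (at x)" for x
    using Deriv.has_derivative_inverse[OF _ df] Inv by auto
  have "partial_dir j (\<lambda>x. inverse (f x)) = (\<lambda>x. (-1) * ((inverse (f x) * partial_dir j f x) * inverse (f x)))" for j
    using partial_dir_at[OF di] partial_dir_at[OF df]
    by (auto simp: fun_eq_iff)
  moreover have "(\<lambda>x. (-1) * ((inverse (f x) * partial_dir j f x) * inverse (f x))) \<in> alg" for j
    using Inv by (intro alg.Mul alg.Const alg.Inv) auto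
  ultimately show ?case using di by (auto intro!: differentiableI simp del: mult_minus_left)
qed

lemma alg_smooth:
  assumes "f \<in> alg"
  shows "smooth_fun f"
proof -
  have "partials js f \<in> alg" for js
    by (induction js) (use assms alg_props in auto)
  then show ?thesis
    unfolding smooth_fun_def using alg_props by (auto simp: differentiable_on_def intro: differentiable_at_withinI)
qed

lemma alg_prod: "finite I \<Longrightarrow> (\<And>i. i \<in> I \<Longrightarrow> f i \<in> alg) \<Longrightarrow> (\<lambda>x. \<Prod>i\<in>I. f i x) \<in> alg"
proof (induction I rule: finite_induct)
  case empty then show ?case by (simp add: alg.Const)
next
  case (insert i I) then show ?case by (simp add: alg.Mul)
qed

lemma alg_sum: "finite I \<Longrightarrow> (\<And>i. i \<in> I \<Longrightarrow> f i \<in> alg) \<Longrightarrow> (\<lambda>x. \<Sum>i\<in>I. f i x) \<in> alg"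
proof (induction I rule: finite_induct)
  case empty then show ?case by (simp add: alg.Const)
next
  case (insert i I) then show ?case by (simp add: alg.Add)
qed

lemma alg_pow: "f \<in> alg \<Longrightarrow> (\<lambda>x. f x ^ n) \<in> alg"
  by (induction n) (auto intro: alg.Const alg.Mul)

lemma smooth_diff: "smooth_fun f \<Longrightarrow> partials js f differentiable (at x)"
  unfolding smooth_fun_def differentiable_on_def by auto

lemma diff_obtain:
  assumes "f differentiable (at x)"
  obtains f' where "(f has_derivative f') (at x)"
  using assms unfolding differentiable_def by blast

lemma partial_dir_add:
  assumes "f differentiable (at x)" "g differentiable (at x)"
  shows "partial_dir j (\<lambda>x. f x + g x) x = partial_dir j f x + partial_dir j g x"
proof -
  obtain f' g' where df: "(f has_derivative f') (at x)" and dg: "(g has_derivative g') (at x)"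
    using assms diff_obtain by metis
  show ?thesis using partial_dir_at[OF has_derivative_add[OF df dg]] partial_dir_at[OF df] partial_dir_at[OF dg] by simp
qed

lemma partial_dir_cmult:
  assumes "f differentiable (at x)"
  shows "partial_dir j (\<lambda>x. c * f x) x = c * partial_dir j f x"
proof -
  obtain f' where df: "(f has_derivative f') (at x)"
    using assms diff_obtain by metis
  show ?thesis using partial_dir_at[OF has_derivative_mult_right[OF df]] partial_dir_at[OF df] by simp
qed

lemma partials_add:
  assumes "smooth_fun f" "smooth_fun g"
  shows "partials js (\<lambda>x. f x + g x) = (\<lambda>x. partials js f x + partials js g x)"
proof (induction js)
  case (Cons j js)
  have "partials (j#js) (\<lambda>x. f x + g x) = partial_dir j (\<lambda>x. partials js f x + partials js g x)"
    using Cons.IH by simp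
  then show ?case using partial_dir_add[OF smooth_diff[OF assms(1)] smooth_diff[OF assms(2)]]
    by (auto simp: fun_eq_iff)
qed simp

lemma partials_cmult:
  assumes "smooth_fun f"
  shows "partials js (\<lambda>x. c * f x) = (\<lambda>x. c * partials js f x)"
proof (induction js)
  case (Cons j js)
  have "partials (j#js) (\<lambda>x. c * f x) = partial_dir j (\<lambda>x. c * partials js f x)"
    using Cons.IH by simp
  then show ?case using partial_dir_cmult[OF smooth_diff[OF assms(1)]]
    by (auto simp: fun_eq_iff)
qed simp

lemma smooth_add: assumes "smooth_fun f" "smooth_fun g" shows "smooth_fun (\<lambda>x. f x + g x)"
  unfolding smooth_fun_def partials_add[OF assms]
  using smooth_diff[OF assms(1)] smooth_diff[OF assms(2)]
  by (auto simp: differentiable_on_def intro!: differentiable_add)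

lemma smooth_cmult: assumes "smooth_fun f" shows "smooth_fun (\<lambda>x. c * f x)"
  unfolding smooth_fun_def partials_cmult[OF assms]
  using smooth_diff[OF assms(1)]
  by (auto simp: differentiable_on_def intro!: differentiable_mult differentiable_const)

lemma smooth_sum_partials:
  assumes "finite L" "\<And>l. l \<in> L \<Longrightarrow> smooth_fun (f l)"
  shows "smooth_fun (\<lambda>x. \<Sum>l\<in>L. f l x) \<and> partials js (\<lambda>x. \<Sum>l\<in>L. f l x) = (\<lambda>x. \<Sum>l\<in>L. partials js (f l) x)"
  using assms
proof (induction L arbitrary: js rule: finite_induct)
  case empty
  show ?case by (simp add: partials_zero smooth_fun_def)
next
  case (insert l L)
  then have IH: "smooth_fun (\<lambda>x. \<Sum>l\<in>L. f l x)" "\<And>js. partials js (\<lambda>x. \<Sum>l\<in>L. f l x) = (\<lambda>x. \<Sum>l\<in>L. partials js (f l) x)"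
    by auto
  have sl: "smooth_fun (f l)" using insert by auto
  show ?case using insert(1,2) smooth_add[OF sl IH(1)] partials_add[OF sl IH(1)] IH(2) by simp
qed

definition scl :: "('N::finite \<Rightarrow> real) \<Rightarrow> real^'N \<Rightarrow> real^'N" where
  "scl c x = (\<chi> j. c j * x$j)"

lemma scl_linear: fixes c :: "'N::finite \<Rightarrow> real" shows "bounded_linear (scl c)"
  unfolding scl_def
proof (rule bounded_linear_intro[where K="\<Sum>j\<in>UNIV. \<bar>c j\<bar>"])
  fix x :: "real^'N"
  have "norm (\<chi> j. c j * x$j) \<le> (\<Sum>j\<in>UNIV. \<bar>(\<chi> j. c j * x$j)$j\<bar>)"
    by (rule norm_le_l1_cart)
  also have "\<dots> \<le> (\<Sum>j\<in>UNIV. \<bar>c j\<bar> * norm x)"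
    by (rule sum_mono) (auto simp: abs_mult intro: mult_left_mono component_le_norm_cart)
  also have "(\<Sum>j\<in>UNIV. \<bar>c j\<bar> * norm x) = norm x * (\<Sum>j\<in>UNIV. \<bar>c j\<bar>)"
    by (simp add: sum_distrib_left mult.commute)
  finally show "norm (\<chi> j. c j * x$j) \<le> norm x * (\<Sum>j\<in>UNIV. \<bar>c j\<bar>)" .
qed (auto simp: vec_eq_iff algebra_simps)

lemma count_prod: fixes j :: "'N::finite" shows
  "(\<Prod>i\<in>UNIV. G i (count_list (j#js) i)) = G j (Suc (count_list js j)) * (\<Prod>i\<in>UNIV - {j}. G i (count_list js i))"
proof -
  have "(\<Prod>i\<in>UNIV. G i (count_list (j#js) i)) = G j (count_list (j#js) j) * (\<Prod>i\<in>UNIV - {j}. G i (count_list (j#js) i))"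
    by (rule prod.remove) auto
  also have "(\<Prod>i\<in>UNIV - {j}. G i (count_list (j#js) i)) = (\<Prod>i\<in>UNIV - {j}. G i (count_list js i))"
    by (rule prod.cong) auto
  finally show ?thesis by simp
qed

lemma count_prod': fixes j :: "'N::finite" shows
  "(\<Prod>i\<in>UNIV. G i (count_list js i)) = G j (count_list js j) * (\<Prod>i\<in>UNIV - {j}. G i (count_list js i))"
  by (rule prod.remove) auto

lemma partials_scl:
  assumes "smooth_fun f"
  shows "partials js (\<lambda>x. f (scl c x)) = (\<lambda>x. (\<Prod>i\<in>UNIV. c i ^ count_list js i) * partials js f (scl c x))"
proof (induction js)
  case Nil then show ?case by simp
next
  case (Cons j js)
  let ?K = "\<Prod>i\<in>UNIV. c i ^ count_list js i"
  have "partial_dir j (\<lambda>x. ?K * partials js f (scl c x)) x = ?K * c j * partial_dir j (partials js f) (scl c x)" for x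
  proof -
    obtain g' where dg: "(partials js f has_derivative g') (at (scl c x))"
      using smooth_diff[OF assms] diff_obtain by metis
    have dD: "(scl c has_derivative scl c) (at x)"
      by (rule bounded_linear_imp_has_derivative[OF scl_linear])
    have d: "((\<lambda>x. ?K * partials js f (scl c x)) has_derivative (\<lambda>v. ?K * g' (scl c v))) (at x)"
      by (rule has_derivative_mult_right[OF has_derivative_compose[OF dD dg]])
    have "scl c (axis j 1) = c j *\<^sub>R axis j 1"
      by (auto simp: scl_def axis_def vec_eq_iff)
    moreover have "linear g'" using dg has_derivative_linear by blast
    ultimately have "g' (scl c (axis j 1)) = c j * g' (axis j 1)"
      by (simp add: linear_scale)
    then show ?thesis using partial_dir_at[OF d] partial_dir_at[OF dg] by simp
  qed
  moreover have "(\<Prod>i\<in>UNIV. c i ^ count_list (j#js) i) = ?K * c j"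
    using count_prod[of "\<lambda>i n. c i ^ n" j js] count_prod'[of "\<lambda>i n. c i ^ n" js j] by simp
  moreover have "partials (j#js) (\<lambda>x. f (scl c x)) = partial_dir j (\<lambda>x. ?K * partials js f (scl c x))"
    using Cons.IH by simp
  ultimately show ?case by (simp add: fun_eq_iff)
qed

lemma smooth_scl:
  assumes "smooth_fun f"
  shows "smooth_fun (\<lambda>x. f (scl c x))"
  unfolding smooth_fun_def partials_scl[OF assms]
proof
  fix js
  have "(\<lambda>x. partials js f (scl c x)) differentiable (at x)" for x
    using differentiable_chain_at[OF bounded_linear_imp_differentiable[OF scl_linear] smooth_diff[OF assms]]
    by (simp add: o_def)
  then show "(\<lambda>x. (\<Prod>i\<in>UNIV. c i ^ count_list js i) * partials js f (scl c x)) differentiable_on UNIV"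
    by (auto simp: differentiable_on_def intro!: differentiable_mult differentiable_const)
qed

definition mnm :: "('N::finite \<Rightarrow> nat) \<Rightarrow> real^'N \<Rightarrow> real" where
  "mnm \<gamma> x = (\<Prod>j\<in>UNIV. x$j ^ \<gamma> j)"

lemma mnm_eq: "mnm \<gamma> = (\<lambda>x. \<Prod>j\<in>UNIV. x$j ^ \<gamma> j)"
  by (rule ext) (simp add: mnm_def)

lemma mnm_alg: "mnm \<gamma> \<in> alg"
proof -
  have "(\<lambda>x. \<Prod>j\<in>UNIV. (\<lambda>x. x$j ^ \<gamma> j) x) \<in> alg"
    by (rule alg_prod) (auto intro: alg_pow alg.Coord)
  then show ?thesis by (simp add: mnm_eq)
qed

fun ff :: "nat \<Rightarrow> nat \<Rightarrow> real" where
  "ff n 0 = 1"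
| "ff n (Suc k) = ff n k * real (n - k)"

lemma ff_fact_aux: "k \<le> n \<Longrightarrow> ff n k * fact (n - k) = fact n"
proof (induction k)
  case (Suc k)
  obtain m where m: "n - k = Suc m" "n - Suc k = m" using Suc.prems
    by (metis Suc_diff_Suc Suc_le_lessD diff_Suc_1 diff_Suc_eq_diff_pred)
  have "ff n (Suc k) * fact (n - Suc k) = ff n k * (real (Suc m) * fact m)"
    unfolding m(2) ff.simps m(1) by simp
  also have "real (Suc m) * fact m = (fact (n - k) :: real)"
    unfolding m(1) by simp
  finally show ?case using Suc by simp
qed simp

lemma ff_fact: "ff n n = fact n"
  using ff_fact_aux[of n n] by simp

lemma ff_zero: "n < k \<Longrightarrow> ff n k = 0"
proof (induction k)
  case (Suc k)
  then show ?case by (cases "k = n") auto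
qed simp

lemma mnm_deriv:
  fixes x :: "real^'N::finite"
  shows "(mnm \<gamma> has_derivative (\<lambda>y. \<Sum>j\<in>UNIV. (of_nat (\<gamma> j) * y$j * x$j ^ (\<gamma> j - 1)) * (\<Prod>k\<in>UNIV - {j}. x$k ^ \<gamma> k))) (at x)"
proof -
  have 0: "((\<lambda>x::real^'N. x$j) has_derivative (\<lambda>v. v$j)) (at x)" for j
    by (rule bounded_linear_imp_has_derivative) (rule bounded_linear_vec_nth)
  show ?thesis
    unfolding mnm_eq
    by (rule has_derivative_prod[OF has_derivative_power[OF 0]])
qed

lemma partial_dir_mnm:
  fixes x :: "real^'N::finite"
  shows "partial_dir i (\<lambda>x. K * mnm \<gamma> x) x = K * real (\<gamma> i) * mnm (\<gamma>(i := \<gamma> i - 1)) x"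
proof -
  have "partial_dir i (\<lambda>x. K * mnm \<gamma> x) x = K * (\<Sum>j\<in>UNIV. (of_nat (\<gamma> j) * (axis i 1::real^'N)$j * x$j ^ (\<gamma> j - 1)) * (\<Prod>k\<in>UNIV - {j}. x$k ^ \<gamma> k))"
    using partial_dir_at[OF has_derivative_mult_right[OF mnm_deriv]] by simp
  also have "(\<Sum>j\<in>UNIV. (of_nat (\<gamma> j) * (axis i 1::real^'N)$j * x$j ^ (\<gamma> j - 1)) * (\<Prod>k\<in>UNIV - {j}. x$k ^ \<gamma> k))
     = (\<Sum>j\<in>UNIV. if j = i then (of_nat (\<gamma> i) * x$i ^ (\<gamma> i - 1)) * (\<Prod>k\<in>UNIV - {i}. x$k ^ \<gamma> k) else 0)"
    by (rule sum.cong) (auto simp: axis_def)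
  also have "\<dots> = (of_nat (\<gamma> i) * x$i ^ (\<gamma> i - 1)) * (\<Prod>k\<in>UNIV - {i}. x$k ^ \<gamma> k)"
    by (simp add: sum.delta)
  also have "mnm (\<gamma>(i := \<gamma> i - 1)) x = x$i ^ (\<gamma> i - 1) * (\<Prod>k\<in>UNIV - {i}. x$k ^ (\<gamma>(i := \<gamma> i - 1)) k)"
    unfolding mnm_def by (subst prod.remove[of UNIV i]) auto
  moreover have "(\<Prod>k\<in>UNIV - {i}. x$k ^ (\<gamma>(i := \<gamma> i - 1)) k) = (\<Prod>k\<in>UNIV - {i}. x$k ^ \<gamma> k)"
    by (rule prod.cong) auto
  ultimately show ?thesis by (simp add: algebra_simps)
qed

lemma partials_mnm:
  fixes \<gamma> :: "'N::finite \<Rightarrow> nat"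
  shows "partials js (mnm \<gamma>) = (\<lambda>x. (\<Prod>i\<in>UNIV. ff (\<gamma> i) (count_list js i)) * mnm (\<lambda>i. \<gamma> i - count_list js i) x)"
proof (induction js)
  case Nil then show ?case by simp
next
  case (Cons j js)
  let ?K = "\<Prod>i\<in>UNIV. ff (\<gamma> i) (count_list js i)"
  let ?d = "\<lambda>i. \<gamma> i - count_list js i"
  have "partials (j#js) (mnm \<gamma>) = partial_dir j (\<lambda>x. ?K * mnm ?d x)"
    using Cons.IH by simp
  also have "\<dots> = (\<lambda>x. ?K * real (?d j) * mnm (?d(j := ?d j - 1)) x)"
    by (rule ext) (rule partial_dir_mnm)
  also have "?d(j := ?d j - 1) = (\<lambda>i. \<gamma> i - count_list (j#js) i)"
    by (auto simp: fun_eq_iff)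
  also have "?K * real (?d j) = (\<Prod>i\<in>UNIV. ff (\<gamma> i) (count_list (j#js) i))"
    using count_prod[of "\<lambda>i n. ff (\<gamma> i) n" j js] count_prod'[of "\<lambda>i n. ff (\<gamma> i) n" js j] by simp
  finally show ?case .
qed

lemma ex_counts: "\<exists>js. \<forall>j::'N::finite. count_list js j = \<alpha> j"
proof -
  obtain xs where xs: "set xs = (UNIV::'N set)" "distinct xs"
    using finite_distinct_list[of "UNIV::'N set"] by auto
  have "distinct xs \<Longrightarrow> \<exists>js. \<forall>j. count_list js j = (if j \<in> set xs then \<alpha> j else 0)" for xs :: "'N list"
  proof (induction xs)
    case Nil then show ?case by (intro exI[of _ "[]"]) simp
  next
    case (Cons y ys)
    then obtain js where js: "\<forall>j. count_list js j = (if j \<in> set ys then \<alpha> j else 0)" by auto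
    have "count_list (replicate n y) j = (if j = y then n else 0)" for n j
      by (induction n) auto
    then show ?case using js Cons.prems by (intro exI[of _ "replicate (\<alpha> y) y @ js"]) auto
  qed
  from this[OF xs(2)] show ?thesis using xs(1) by auto
qed

lemma mpartial_counts: fixes \<alpha> :: "'N::finite \<Rightarrow> nat" shows "\<forall>j. count_list (SOME js. \<forall>j. count_list js j = \<alpha> j) j = (\<alpha> j :: nat)"
  by (rule someI_ex[OF ex_counts])

lemma mpartial_mnm:
  "mpartial \<beta> (mnm \<alpha>) x = (\<Prod>i\<in>UNIV. ff (\<alpha> i) (\<beta> i)) * mnm (\<lambda>i. \<alpha> i - \<beta> i) x"
  unfolding mpartial_def partials_mnm using mpartial_counts[of \<beta>] by simp

lemma aidx_le:
  assumes a: "\<forall>j. a j \<ge> (1::nat)" and "\<alpha> \<in> aidx a" "\<beta> \<in> aidx a" "\<forall>i. \<beta> i \<le> \<alpha> i"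
  shows "\<alpha> = \<beta>"
proof -
  have "(\<Sum>j\<in>UNIV. (real (\<alpha> j) - real (\<beta> j)) / real (a j)) = (\<Sum>j\<in>UNIV. real (\<alpha> j) / real (a j)) - (\<Sum>j\<in>UNIV. real (\<beta> j) / real (a j))"
    by (simp add: diff_divide_distrib sum_subtractf)
  also have "\<dots> = 0" using assms(2,3) by (simp add: aidx_def)
  finally have s0: "(\<Sum>j\<in>UNIV. (real (\<alpha> j) - real (\<beta> j)) / real (a j)) = 0" .
  have "\<forall>j\<in>UNIV. 0 \<le> (real (\<alpha> j) - real (\<beta> j)) / real (a j)"
    using assms(4) by (auto intro!: divide_nonneg_nonneg)
  then have z: "\<forall>j\<in>UNIV. (real (\<alpha> j) - real (\<beta> j)) / real (a j) = 0"
    using sum_nonneg_eq_0_iff[of UNIV "\<lambda>j. (real (\<alpha> j) - real (\<beta> j)) / real (a j)"] s0 by simp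
  show ?thesis
  proof (rule ext)
    fix j
    have "(real (\<alpha> j) - real (\<beta> j)) / real (a j) = 0" using z by simp
    moreover have "real (a j) \<noteq> 0" using a[rule_format, of j] by simp
    ultimately show "\<alpha> j = \<beta> j" by simp
  qed
qed

lemma mpartial_mnm_aidx:
  assumes a: "\<forall>j. a j \<ge> (1::nat)" and "\<alpha> \<in> aidx a" "\<beta> \<in> aidx a"
  shows "mpartial \<beta> (mnm \<alpha>) x = (if \<alpha> = \<beta> then (\<Prod>i\<in>UNIV. fact (\<alpha> i)) else 0)"
proof (cases "\<alpha> = \<beta>")
  case True
  then show ?thesis by (simp add: mpartial_mnm ff_fact mnm_def)
next
  case False
  then obtain i where "\<alpha> i < \<beta> i" using aidx_le[OF assms] by (meson not_le)
  then have "(\<Prod>i\<in>UNIV. ff (\<alpha> i) (\<beta> i)) = 0" by (intro prod_zero) (auto intro: ff_zero)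
  then show ?thesis using False by (simp add: mpartial_mnm)
qed

definition bumpA :: "real \<Rightarrow> real" where "bumpA t = HH 0 (7/8 + (-1) * t) * HH 0 (7/8 + 1 * t)"
definition bumpB :: "real \<Rightarrow> real" where "bumpB t = HH 0 (-3/4 + 1 * t) + HH 0 (-3/4 + (-1) * t)"
definition g1 :: "real \<Rightarrow> real" where "g1 t = bumpA t * inverse (bumpA t + bumpB t)"
definition psi :: "real^'N::finite \<Rightarrow> real" where "psi x = (\<Prod>i\<in>UNIV. g1 (x$i))"

lemma HH0_pos: "t > 0 \<Longrightarrow> HH 0 t > 0" by (simp add: HH_def)
lemma HH0_nonneg: "HH 0 t \<ge> 0" by (simp add: HH_def)
lemma HH0_zero: "t \<le> 0 \<Longrightarrow> HH 0 t = 0" by (simp add: HH_def)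

lemma bump_ne: "bumpA t + bumpB t \<noteq> 0"
proof (cases "\<bar>t\<bar> < 7/8")
  case True
  then have "bumpA t > 0" unfolding bumpA_def by (intro mult_pos_pos HH0_pos) auto
  moreover have "bumpB t \<ge> 0" unfolding bumpB_def by (intro add_nonneg_nonneg HH0_nonneg)
  ultimately show ?thesis by linarith
next
  case False
  have "bumpB t > 0"
  proof (cases "t > 0")
    case True
    then have "HH 0 (-3/4 + 1 * t) > 0" using False by (intro HH0_pos) auto
    then show ?thesis unfolding bumpB_def using HH0_nonneg[of "-3/4 + (-1) * t"] by linarith
  next
    case f: False
    then have "HH 0 (-3/4 + (-1) * t) > 0" using False by (intro HH0_pos) auto
    then show ?thesis unfolding bumpB_def using HH0_nonneg[of "-3/4 + 1 * t"] by linarith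
  qed
  moreover have "bumpA t \<ge> 0" unfolding bumpA_def by (intro mult_nonneg_nonneg HH0_nonneg)
  ultimately show ?thesis by linarith
qed

lemma g1_one: "\<bar>t\<bar> \<le> 3/4 \<Longrightarrow> g1 t = 1"
proof -
  assume t: "\<bar>t\<bar> \<le> 3/4"
  then have "HH 0 (-3/4 + 1 * t) = 0" "HH 0 (-3/4 + (-1) * t) = 0" by (auto intro!: HH0_zero)
  then have "bumpB t = 0" unfolding bumpB_def by simp
  moreover have "bumpA t > 0" using t unfolding bumpA_def by (intro mult_pos_pos HH0_pos) auto
  ultimately show ?thesis by (simp add: g1_def)
qed

lemma g1_zero: "\<bar>t\<bar> \<ge> 7/8 \<Longrightarrow> g1 t = 0"
proof -
  assume t: "\<bar>t\<bar> \<ge> 7/8"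
  then have "bumpA t = 0" unfolding bumpA_def by (cases "t > 0") (auto simp: HH0_zero)
  then show ?thesis by (simp add: g1_def)
qed

lemma psi_alg: "psi \<in> alg"
proof -
  have A: "(\<lambda>x::real^'N. bumpA (x$i)) \<in> alg" for i
    unfolding bumpA_def by (intro alg.Mul alg.HF)
  have B: "(\<lambda>x::real^'N. bumpB (x$i)) \<in> alg" for i
    unfolding bumpB_def by (intro alg.Add alg.HF)
  have "(\<lambda>x::real^'N. \<Prod>i\<in>UNIV. (\<lambda>x. g1 (x$i)) x) \<in> alg"
    unfolding g1_def
    by (intro alg_prod alg.Mul alg.Inv alg.Add A B) (auto simp: bump_ne)
  then show ?thesis by (simp add: psi_def[abs_def])
qed

lemma psi_one: "x \<in> box (-(\<chi> i. 3/4)) (\<chi> i. 3/4) \<Longrightarrow> psi x = 1"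
proof -
  assume "x \<in> box (-(\<chi> i. 3/4)) (\<chi> i. 3/4)"
  then have h: "-(3/4) < x$i" "x$i < 3/4" for i unfolding mem_box_cart by simp_all
  have "\<bar>x$i\<bar> \<le> 3/4" for i using h[of i] unfolding abs_le_iff by linarith
  then show ?thesis unfolding psi_def by (simp add: g1_one)
qed

lemma psi_supp: "psi x \<noteq> 0 \<Longrightarrow> x \<in> box (-(\<chi> i. 7/8)) (\<chi> i. 7/8)"
proof -
  assume p: "psi x \<noteq> 0"
  have h: "\<bar>x$i\<bar> < 7/8" for i
  proof (rule ccontr)
    assume "\<not> \<bar>x$i\<bar> < 7/8"
    then have "g1 (x$i) = 0" by (intro g1_zero) simp
    then have "psi x = 0" unfolding psi_def by (intro prod_zero) auto
    then show False using p by simp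
  qed
  have "-(7/8) < x$i \<and> x$i < 7/8" for i using h[of i] unfolding abs_less_iff by linarith
  then show ?thesis unfolding mem_box_cart by simp
qed


definition Asum :: "('N::finite \<Rightarrow> nat) \<Rightarrow> real" where "Asum a = (\<Sum>j\<in>UNIV. real (a j))"
definition cs :: "('N::finite \<Rightarrow> nat) \<Rightarrow> 'N \<Rightarrow> real" where "cs a j = 2 powr (Asum a / real (a j))"
definition ts :: "('N::finite \<Rightarrow> nat) \<Rightarrow> real" where "ts a = 2 powr (- Asum a)"

lemma scale_id:
  assumes a: "\<forall>j. a j \<ge> (1::nat)" and al: "\<alpha> \<in> aidx a"
  shows "ts a * (\<Prod>j\<in>UNIV. cs a j ^ \<alpha> j) = 1"
proof -
  have "cs a j ^ \<alpha> j = 2 powr (Asum a / real (a j) * real (\<alpha> j))" for j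
  proof -
    have "cs a j ^ \<alpha> j = (cs a j) powr real (\<alpha> j)"
      by (simp add: cs_def powr_realpow)
    then show ?thesis by (simp add: cs_def powr_powr)
  qed
  then have "(\<Prod>j\<in>UNIV. cs a j ^ \<alpha> j) = 2 powr (\<Sum>j\<in>UNIV. Asum a / real (a j) * real (\<alpha> j))"
    by (simp add: powr_sum)
  also have "(\<Sum>j\<in>UNIV. Asum a / real (a j) * real (\<alpha> j)) = Asum a * (\<Sum>j\<in>UNIV. real (\<alpha> j) / real (a j))"
    by (simp add: sum_distrib_left)
  also have "\<dots> = Asum a" using al by (simp add: aidx_def)
  finally show ?thesis by (simp add: ts_def powr_add[symmetric])
qed

lemma cs_ge:
  assumes a: "\<forall>j. a j \<ge> (1::nat)"
  shows "cs a j \<ge> 2"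
proof -
  have "real (a j) \<le> Asum a" unfolding Asum_def
    by (rule member_le_sum) auto
  moreover have "real (a j) > 0" using a[rule_format, of j] by simp
  ultimately have "Asum a / real (a j) \<ge> 1" by simp
  then have "2 powr 1 \<le> 2 powr (Asum a / real (a j))" by (intro powr_mono) auto
  then show ?thesis by (simp add: cs_def)
qed

lemma ts_pos: "ts a > 0" by (simp add: ts_def)

definition rbox :: "('N::finite \<Rightarrow> nat) \<Rightarrow> (real^'N) set" where
  "rbox a = box (-(\<chi> j. inverse (cs a j))) (\<chi> j. inverse (cs a j))"

lemma rbox_sub:
  assumes a: "\<forall>j. a j \<ge> (1::nat)"
  shows "rbox a \<subseteq> box (-(\<chi> i. 3/4)) (\<chi> i. 3/4)"
proof
  fix x assume "x \<in> rbox a"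
  then have h: "- inverse (cs a j) < x$j" "x$j < inverse (cs a j)" for j
    unfolding rbox_def mem_box_cart by auto
  have r: "inverse (cs a j) \<le> 1/2" for j using le_imp_inverse_le[OF cs_ge[OF a, of j]]
    by simp
  have "-(3/4) < x$j \<and> x$j < 3/4" for j using h[of j] r[of j] by linarith
  then show "x \<in> box (-(\<chi> i. 3/4)) (\<chi> i. 3/4)" unfolding mem_box_cart by simp
qed

lemma box34_sub: "box (-(\<chi> i. 3/4)) (\<chi> i. 3/4) \<subseteq> (cubeQ :: (real^'N::finite) set)"
proof
  fix x :: "real^'N" assume "x \<in> box (-(\<chi> i. 3/4)) (\<chi> i. 3/4)"
  then have h: "-(3/4) < x$i" "x$i < 3/4" for i unfolding mem_box_cart by simp_all
  have "-1 < x$i \<and> x$i < 1" for i using h[of i] by linarith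
  then show "x \<in> cubeQ" unfolding cubeQ_def mem_box_cart by simp
qed

lemma cbox78_sub: "cbox (-(\<chi> i. 7/8)) (\<chi> i. 7/8) \<subseteq> (cubeQ :: (real^'N::finite) set)"
proof
  fix x :: "real^'N" assume "x \<in> cbox (-(\<chi> i. 7/8)) (\<chi> i. 7/8)"
  then have h: "-(7/8) \<le> x$i" "x$i \<le> 7/8" for i unfolding mem_box_cart by simp_all
  have "-1 < x$i \<and> x$i < 1" for i using h[of i] by linarith
  then show "x \<in> cubeQ" unfolding cubeQ_def mem_box_cart by simp
qed


definition Ecoef :: "('m \<Rightarrow> ('N::finite \<Rightarrow> nat)) \<Rightarrow> 'm \<Rightarrow> real" where
  "Ecoef idx l = inverse (\<Prod>j\<in>UNIV. fact (idx l j))"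

definition E :: "('m \<Rightarrow> ('N::finite \<Rightarrow> nat)) \<Rightarrow> 'm \<Rightarrow> real^'N \<Rightarrow> real" where
  "E idx l x = psi x * (Ecoef idx l * mnm (idx l) x)"

lemma E_eq: "E idx l = (\<lambda>x. psi x * ((\<lambda>x. Ecoef idx l) x * mnm (idx l) x))"
  by (rule ext) (simp add: E_def)

lemma E_alg: "E idx l \<in> alg"
  unfolding E_eq by (intro alg.Mul psi_alg alg.Const mnm_alg)

definition phi :: "('N::finite \<Rightarrow> nat) \<Rightarrow> ('m::finite \<Rightarrow> ('N \<Rightarrow> nat)) \<Rightarrow> real^'m^'n
    \<Rightarrow> (real^'N \<Rightarrow> real^'n::finite) \<Rightarrow> real^'N \<Rightarrow> real^'n" where
  "phi a idx Y u x = ts a *\<^sub>R u (scl (cs a) x) + (\<chi> i. \<Sum>l\<in>UNIV. Y$i$l * E idx l x)"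

lemma phi_comp: "(\<lambda>y. phi a idx Y u y $ i) = (\<lambda>y. ts a * (u (scl (cs a) y) $ i) + (\<Sum>l\<in>UNIV. Y$i$l * E idx l y))"
  by (rule ext) (simp add: phi_def)

lemma Cc_smooth: "u \<in> Cc_inf \<Longrightarrow> smooth_fun (\<lambda>x. u x $ i)"
  by (simp add: Cc_inf_def)

lemma Cc_supp: "u \<in> Cc_inf \<Longrightarrow> closure {x. u x \<noteq> 0} \<subseteq> cubeQ"
  by (simp add: Cc_inf_def)

lemma us_smooth: "u \<in> Cc_inf \<Longrightarrow> smooth_fun (\<lambda>y. ts a * (u (scl (cs a) y) $ i))"
  by (rule smooth_cmult[OF smooth_scl[OF Cc_smooth]])

lemma wE_alg: "(\<lambda>y. \<Sum>l\<in>UNIV. Y$i$l * E idx l y) \<in> alg"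
  by (intro alg_sum alg.Mul alg.Const E_alg) auto

lemma cs_pos: "cs a j > 0" by (simp add: cs_def)

lemma supp_us:
  assumes "u \<in> Cc_inf"
  shows "closure {x. u (scl (cs a) x) \<noteq> 0} \<subseteq> rbox a"
proof -
  let ?T = "scl (cs a) -` closure {y. u y \<noteq> 0}"
  have cl: "closed ?T"
    by (intro continuous_closed_vimage closed_closure linear_continuous_at scl_linear)
  have "{x. u (scl (cs a) x) \<noteq> 0} \<subseteq> ?T" using closure_subset[of "{y. u y \<noteq> 0}"] by auto
  then have "closure {x. u (scl (cs a) x) \<noteq> 0} \<subseteq> ?T" by (rule closure_minimal[OF _ cl])
  also have "?T \<subseteq> rbox a"
  proof
    fix x assume "x \<in> ?T"
    then have "scl (cs a) x \<in> cubeQ" using Cc_supp[OF assms] by auto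
    then have h: "-1 < cs a j * x$j" "cs a j * x$j < 1" for j
      unfolding cubeQ_def mem_box_cart scl_def by auto
    have "- inverse (cs a j) < x$j \<and> x$j < inverse (cs a j)" for j
    proof -
      have 1: "-1 / cs a j < x$j" using pos_divide_less_eq[OF cs_pos[of a j], of "-1" "x$j"] h(1)[of j] by (simp add: mult.commute)
      have 2: "x$j < 1 / cs a j" using pos_less_divide_eq[OF cs_pos[of a j], of "x$j" 1] h(2)[of j] by (simp add: mult.commute)
      show ?thesis using 1 2 by (simp add: inverse_eq_divide)
    qed
    then show "x \<in> rbox a" unfolding rbox_def mem_box_cart by simp
  qed
  finally show ?thesis .
qed

lemma phi_in:
  assumes a: "\<forall>j. a j \<ge> (1::nat)" and u: "u \<in> Cc_inf"
  shows "phi a idx Y u \<in> Cc_inf"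
proof -
  have sm: "smooth_fun (\<lambda>x. phi a idx Y u x $ i)" for i
    unfolding phi_comp by (rule smooth_add[OF us_smooth[OF u] alg_smooth[OF wE_alg]])
  let ?S = "closure {x. u (scl (cs a) x) \<noteq> 0} \<union> cbox (-(\<chi> i. 7/8)) (\<chi> i. 7/8)"
  have "{x. phi a idx Y u x \<noteq> 0} \<subseteq> ?S"
  proof
    fix x assume x: "x \<in> {x. phi a idx Y u x \<noteq> 0}"
    show "x \<in> ?S"
    proof (cases "u (scl (cs a) x) = 0")
      case False then show ?thesis using closure_subset[of "{x. u (scl (cs a) x) \<noteq> 0}"] by auto
    next
      case True
      then have "(\<chi> i. \<Sum>l\<in>UNIV. Y$i$l * E idx l x) \<noteq> 0" using x by (simp add: phi_def)
      then obtain i where "(\<Sum>l\<in>UNIV. Y$i$l * E idx l x) \<noteq> 0" by (auto simp: vec_eq_iff)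
      then obtain l where "E idx l x \<noteq> 0" by (metis (no_types, lifting) mult_zero_right sum.neutral)
      then have "psi x \<noteq> 0" by (simp add: E_def)
      then show ?thesis using psi_supp box_subset_cbox by blast
    qed
  qed
  then have "closure {x. phi a idx Y u x \<noteq> 0} \<subseteq> ?S"
    by (rule closure_minimal) auto
  also have "?S \<subseteq> cubeQ"
    using supp_us[OF u, of a] rbox_sub[OF a] box34_sub cbox78_sub by blast
  finally show ?thesis unfolding Cc_inf_def using sm by auto
qed

lemma mpartial_phi:
  assumes u: "u \<in> Cc_inf"
  shows "mpartial \<beta> (\<lambda>y. phi a idx Y u y $ i) x =
    mpartial \<beta> (\<lambda>y. ts a * (u (scl (cs a) y) $ i)) x + (\<Sum>l\<in>UNIV. Y$i$l * mpartial \<beta> (E idx l) x)"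
proof -
  let ?js = "SOME js. \<forall>j. count_list js j = \<beta> j"
  have sE: "smooth_fun (\<lambda>y. Y$i$l * E idx l y)" for l
    by (rule smooth_cmult[OF alg_smooth[OF E_alg]])
  have "partials ?js (\<lambda>y. \<Sum>l\<in>UNIV. Y$i$l * E idx l y) = (\<lambda>y. \<Sum>l\<in>UNIV. partials ?js (\<lambda>y. Y$i$l * E idx l y) y)"
    using smooth_sum_partials[of UNIV "\<lambda>l y. Y$i$l * E idx l y"] sE by auto
  also have "\<dots> = (\<lambda>y. \<Sum>l\<in>UNIV. Y$i$l * partials ?js (E idx l) y)"
    by (simp add: partials_cmult[OF alg_smooth[OF E_alg]])
  finally show ?thesis
    unfolding phi_comp mpartial_def partials_add[OF us_smooth[OF u] alg_smooth[OF wE_alg]] by simp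
qed

lemma mpartial_us_inner:
  assumes u: "u \<in> Cc_inf" and a: "\<forall>j. a j \<ge> (1::nat)" and b: "\<beta> \<in> aidx a"
  shows "mpartial \<beta> (\<lambda>y. ts a * (u (scl (cs a) y) $ i)) x = mpartial \<beta> (\<lambda>y. u y $ i) (scl (cs a) x)"
proof -
  have "(\<Prod>j\<in>UNIV. cs a j ^ count_list (SOME js. \<forall>j. count_list js j = \<beta> j) j) = (\<Prod>j\<in>UNIV. cs a j ^ \<beta> j)"
    using mpartial_counts[of \<beta>] by simp
  then show ?thesis
    unfolding mpartial_def partials_cmult[OF smooth_scl[OF Cc_smooth[OF u]]] partials_scl[OF Cc_smooth[OF u]]
    using scale_id[OF a b] by (simp add: mult.assoc[symmetric])
qed

lemma mpartial_us_outer: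
  assumes u: "u \<in> Cc_inf" and x: "x \<notin> rbox a"
  shows "mpartial \<beta> (\<lambda>y. ts a * (u (scl (cs a) y) $ i)) x = 0"
proof -
  let ?S = "{x. u (scl (cs a) x) \<noteq> 0}"
  let ?U = "- closure ?S"
  have xU: "x \<in> ?U" using supp_us[OF u, of a] x by auto
  have oU: "open ?U" by (simp add: open_Compl)
  have zero: "ts a * (u (scl (cs a) y) $ i) = 0" if "y \<in> ?U" for y
  proof -
    have "y \<notin> ?S" using that closure_subset[of ?S] by blast
    then show ?thesis by simp
  qed
  have "partials (SOME js. \<forall>j. count_list js j = \<beta> j) (\<lambda>y. ts a * (u (scl (cs a) y) $ i)) x
      = partials (SOME js. \<forall>j. count_list js j = \<beta> j) (\<lambda>y. 0) x"
    by (rule partials_local[OF oU zero xU])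
  then show ?thesis unfolding mpartial_def by (simp add: partials_zero)
qed

lemma idx_facts:
  assumes "bij_betw idx UNIV (aidx a)"
  shows "idx k \<in> aidx a" "idx l = idx k \<longleftrightarrow> l = k"
  using assms by (auto simp: bij_betw_def inj_on_def)

lemma mpartial_E_inner:
  assumes a: "\<forall>j. a j \<ge> (1::nat)" and bij: "bij_betw idx UNIV (aidx a)" and x: "x \<in> rbox a"
  shows "mpartial (idx k) (E idx l) x = (if l = k then 1 else 0)"
proof -
  let ?js = "SOME js. \<forall>j. count_list js j = idx k j"
  have U: "x \<in> box (-(\<chi> i. 3/4)) (\<chi> i. 3/4)" using rbox_sub[OF a] x by auto
  have "partials ?js (E idx l) x = partials ?js (\<lambda>y. Ecoef idx l * mnm (idx l) y) x"
    by (rule partials_local[OF open_box _ U]) (simp add: E_def psi_one)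
  also have "\<dots> = Ecoef idx l * mpartial (idx k) (mnm (idx l)) x"
    by (simp add: partials_cmult[OF alg_smooth[OF mnm_alg]] mpartial_def)
  also have "\<dots> = Ecoef idx l * (if l = k then (\<Prod>i\<in>UNIV. fact (idx l i)) else 0)"
    using mpartial_mnm_aidx[OF a idx_facts(1)[OF bij, of l] idx_facts(1)[OF bij, of k], of x] idx_facts(2)[OF bij, of l k]
    by simp
  also have "\<dots> = (if l = k then 1 else 0)"
    by (simp add: Ecoef_def)
  finally show ?thesis by (simp add: mpartial_def)
qed

lemma grad_inner:
  assumes a: "\<forall>j. a j \<ge> (1::nat)" and bij: "bij_betw idx UNIV (aidx a)" and u: "u \<in> Cc_inf"
    and x: "x \<in> rbox a"
  shows "grad_a idx (phi a idx Y u) x = grad_a idx u (scl (cs a) x) + Y"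
proof -
  have "mpartial (idx k) (\<lambda>y. phi a idx Y u y $ i) x = mpartial (idx k) (\<lambda>y. u y $ i) (scl (cs a) x) + Y$i$k" for i k
  proof -
    have "(\<Sum>l\<in>UNIV. Y$i$l * mpartial (idx k) (E idx l) x) = (\<Sum>l\<in>UNIV. if l = k then Y$i$l else 0)"
      by (rule sum.cong) (auto simp: mpartial_E_inner[OF a bij x])
    also have "\<dots> = Y$i$k" by simp
    finally show ?thesis
      using mpartial_phi[OF u, where \<beta>="idx k" and a=a and idx=idx and Y=Y and i=i and x=x]
        mpartial_us_inner[OF u a idx_facts(1)[OF bij, of k], where i=i and x=x] by simp
  qed
  then show ?thesis unfolding grad_a_def by (simp add: vec_eq_iff)
qed

lemma grad_outer:
  assumes u: "u \<in> Cc_inf" and x: "x \<notin> rbox a"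
  shows "grad_a idx (phi a idx Y u) x = (\<chi> i. \<chi> k. \<Sum>l\<in>UNIV. Y$i$l * mpartial (idx k) (E idx l) x)"
  unfolding grad_a_def vec_eq_iff
proof (intro allI)
  fix i k
  show "(\<chi> i k. mpartial (idx k) (\<lambda>y. phi a idx Y u y $ i) x) $ i $ k =
         (\<chi> i k. \<Sum>l\<in>UNIV. Y $ i $ l * mpartial (idx k) (E idx l) x) $ i $ k"
    using mpartial_phi[OF u, where \<beta>="idx k" and a=a and idx=idx and Y=Y and i=i and x=x]
      mpartial_us_outer[OF u x, where \<beta>="idx k" and i=i] by simp
qed

lemma partials_alg: "f \<in> alg \<Longrightarrow> partials js f \<in> alg"
  by (induction js) (auto dest: alg_props)

lemma alg_cont: "f \<in> alg \<Longrightarrow> continuous_on S f"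
  using alg_props by (intro differentiable_imp_continuous_on differentiable_at_imp_differentiable_on) auto

lemma E_bound:
  fixes idx :: "'m::finite \<Rightarrow> ('N::finite \<Rightarrow> nat)"
  shows "\<exists>B\<ge>0. \<forall>x\<in>cbox (-1) (1::real^'N). \<forall>k l. \<bar>mpartial (idx k) (E idx l) x\<bar> \<le> B"
proof -
  let ?G = "\<lambda>x. \<Sum>k\<in>UNIV. \<Sum>l\<in>UNIV. \<bar>mpartial (idx k) (E idx l) x\<bar>"
  have "continuous_on (cbox (-1) 1) ?G"
    unfolding mpartial_def by (intro continuous_intros alg_cont partials_alg E_alg)
  then have "compact (?G ` cbox (-1) 1)" by (rule compact_continuous_image[OF _ compact_cbox])
  then obtain B where B: "\<forall>y\<in>?G ` cbox (-1) 1. norm y \<le> B"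
    using compact_imp_bounded bounded_iff by metis
  show ?thesis
  proof (intro exI[of _ "\<bar>B\<bar>"] conjI ballI allI)
    show "0 \<le> \<bar>B\<bar>" by simp
    fix x k l assume x: "x \<in> cbox (-1) (1::real^'N)"
    have "\<bar>mpartial (idx k) (E idx l) x\<bar> \<le> (\<Sum>l\<in>UNIV. \<bar>mpartial (idx k) (E idx l) x\<bar>)"
      by (rule member_le_sum) auto
    also have "\<dots> \<le> ?G x"
      by (rule member_le_sum[where f="\<lambda>k. \<Sum>l\<in>UNIV. \<bar>mpartial (idx k) (E idx l) x\<bar>"]) (auto intro: sum_nonneg)
    also have "?G x \<le> B" using B x by fastforce
    finally show "\<bar>mpartial (idx k) (E idx l) x\<bar> \<le> \<bar>B\<bar>" by simp
  qed
qed

lemma norm_vec_le_sum: "norm (x::'a::real_normed_vector^'n::finite) \<le> (\<Sum>i\<in>UNIV. norm (x$i))"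
  unfolding norm_vec_def by (rule L2_set_le_sum) simp

lemma mat_bound:
  fixes Y :: "real^'m::finite^'n::finite" and P :: "'m \<Rightarrow> 'm \<Rightarrow> real"
  assumes P: "\<forall>k l. \<bar>P k l\<bar> \<le> B"
  shows "norm (\<chi> i. \<chi> k. \<Sum>l\<in>UNIV. Y$i$l * P k l) \<le> real (CARD('n) * CARD('m) * CARD('m)) * B * norm Y"
proof -
  let ?M = "(\<chi> i. \<chi> k. \<Sum>l\<in>UNIV. Y$i$l * P k l) :: real^'m^'n"
  have pt: "\<bar>Y$i$l * P k l\<bar> \<le> B * norm Y" for i l k
  proof -
    have "\<bar>Y$i$l\<bar> \<le> norm Y"
      using component_le_norm_cart[of "Y$i" l] Finite_Cartesian_Product.norm_nth_le[of Y i] by linarith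
    then have "\<bar>Y$i$l\<bar> * \<bar>P k l\<bar> \<le> norm Y * B"
      by (rule mult_mono) (use P in auto)
    then show ?thesis unfolding abs_mult by (simp add: mult.commute)
  qed
  have e: "\<bar>\<Sum>l\<in>UNIV. Y$i$l * P k l\<bar> \<le> real CARD('m) * (B * norm Y)" for i k
  proof -
    have "\<bar>\<Sum>l\<in>UNIV. Y$i$l * P k l\<bar> \<le> (\<Sum>l\<in>UNIV. \<bar>Y$i$l * P k l\<bar>)" by (rule sum_abs)
    also have "\<dots> \<le> (\<Sum>l\<in>(UNIV::'m set). B * norm Y)"
      by (intro sum_mono pt)
    finally show ?thesis by simp
  qed
  have "norm ?M \<le> (\<Sum>i\<in>UNIV. norm (?M$i))" by (rule norm_vec_le_sum)
  also have "\<dots> \<le> (\<Sum>i\<in>(UNIV::'n set). real CARD('m) * (real CARD('m) * (B * norm Y)))"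
  proof (rule sum_mono)
    fix i
    have "norm (?M$i) \<le> (\<Sum>k\<in>UNIV. \<bar>?M$i$k\<bar>)" by (rule norm_le_l1_cart)
    also have "\<dots> \<le> (\<Sum>k\<in>(UNIV::'m set). real CARD('m) * (B * norm Y))"
      by (rule sum_mono) (simp add: e)
    finally show "norm (?M$i) \<le> real CARD('m) * (real CARD('m) * (B * norm Y))" by simp
  qed
  finally show ?thesis by (simp add: algebra_simps)
qed

lemma grad_cont:
  assumes "v \<in> Cc_inf"
  shows "continuous_on S (grad_a idx v)"
proof -
  have "continuous_on S (\<lambda>x. mpartial (idx k) (\<lambda>y. v y $ i) x)" for k i
    unfolding mpartial_def
    by (intro differentiable_imp_continuous_on differentiable_at_imp_differentiable_on smooth_diff Cc_smooth[OF assms])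
  then show ?thesis unfolding grad_a_def by (intro continuous_on_vec_lambda)
qed

lemma LINT_eq:
  fixes g :: "real^'N::finite \<Rightarrow> real"
  assumes "continuous_on UNIV g"
  shows "(LINT x:cubeQ|lborel. g x) = integral (cbox (-1) 1) g"
proof -
  have "set_integrable lborel (cbox (-1) 1) g"
    unfolding set_integrable_def
    by (rule borel_integrable_compact[OF compact_cbox continuous_on_subset[OF assms]]) auto
  then have "set_integrable lborel (box (-1) 1) g"
    by (rule set_integrable_subset) (auto simp: box_subset_cbox)
  then show ?thesis
    unfolding cubeQ_def using set_borel_integral_eq_integral(2) integral_open_interval by metis
qed

lemma V_eq: "measure lborel (cubeQ :: (real^'N::finite) set) = measure lborel (cbox (-1) (1::real^'N))"
  unfolding cubeQ_def measure_lborel_box_eq measure_lborel_cbox_eq by simp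

lemma V_pos: "measure lborel (cubeQ :: (real^'N::finite) set) > 0"
  unfolding V_eq by (rule content_pos_lt) (auto simp: inner_axis Basis_vec_def)

lemma powr_sum_le:
  fixes a b p :: real
  assumes "0 \<le> a" "0 \<le> b" "0 \<le> p"
  shows "(a + b) powr p \<le> 2 powr p * (a powr p + b powr p)"
proof -
  have "(a + b) powr p \<le> (2 * max a b) powr p"
    by (rule powr_mono2) (use assms in auto)
  also have "\<dots> = 2 powr p * (max a b) powr p" using assms by (simp add: powr_mult)
  also have "(max a b) powr p \<le> a powr p + b powr p"
    by (cases "a \<le> b") (auto simp: max_def)
  finally show ?thesis by (simp add: mult_left_mono)
qed

lemma zero_Cc: "(\<lambda>x. 0 :: real^'n::finite) \<in> (Cc_inf :: (real^'N::finite \<Rightarrow> real^'n) set)"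
  unfolding Cc_inf_def smooth_fun_def by (simp add: partials_zero)

lemma grad_zero: "grad_a idx (\<lambda>x. 0::real^'n::finite) x = 0"
  unfolding grad_a_def mpartial_def by (simp add: partials_zero vec_eq_iff)

lemma QF_le:
  fixes idx :: "'m::finite \<Rightarrow> ('N::finite \<Rightarrow> nat)" and F :: "real^'m^'n::finite \<Rightarrow> real"
  shows "QF idx F X \<le> ereal (F X)"
proof -
  have "QF idx F X \<le> ereal ((1 / measure lborel (cubeQ::(real^'N) set)) *
      (LINT x:cubeQ|lborel. F (X + grad_a idx (\<lambda>x::real^'N. 0::real^'n) x)))"
    unfolding QF_def by (rule INF_lower) (rule zero_Cc)
  also have "(LINT x:cubeQ|lborel. F (X + grad_a idx (\<lambda>x::real^'N. 0::real^'n) x)) = measure lborel (cubeQ::(real^'N) set) * F X"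
    by (simp add: grad_zero LINT_eq V_eq)
  finally show ?thesis using V_pos[where 'N='N] by simp
qed

lemma rbox_image:
  fixes a :: "'N::finite \<Rightarrow> nat"
  shows "(\<lambda>x. \<chi> k. x$k / cs a k) ` cbox (-1) (1::real^'N) = cbox (-(\<chi> j. inverse (cs a j))) (\<chi> j. inverse (cs a j))"
proof -
  have f1: "(\<lambda>x::real^'N. \<chi> k. x$k / cs a k) = (\<lambda>x. \<chi> k. inverse (cs a k) * x$k)"
    by (auto simp: fun_eq_iff vec_eq_iff divide_inverse mult.commute)
  have "cbox (-1) (1::real^'N) \<noteq> {}" by (auto simp: box_ne_empty inner_axis Basis_vec_def)
  moreover have "min (inverse (cs a k) * (-1::real^'N)$k) (inverse (cs a k) * (1::real^'N)$k) = - inverse (cs a k)" for k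
    using cs_pos[of a k] by simp
  moreover have "max (inverse (cs a k) * (-1::real^'N)$k) (inverse (cs a k) * (1::real^'N)$k) = inverse (cs a k)" for k
    using cs_pos[of a k] by simp
  moreover have "(-(\<chi> j. inverse (cs a j))) = (\<chi> j. - inverse (cs a j) :: real^'N)"
    by (simp add: vec_eq_iff)
  ultimately show ?thesis unfolding f1 using image_stretch_interval_cart[of "\<lambda>k. inverse (cs a k)" "-1" "1::real^'N"]
    by simp
qed

lemma stretch_integral:
  fixes g :: "real^'N::finite \<Rightarrow> real" and a :: "'N \<Rightarrow> nat"
  assumes g: "continuous_on UNIV g"
  shows "integral (rbox a) (\<lambda>x. g (scl (cs a) x)) = integral (cbox (-1) 1) g / (\<Prod>j\<in>UNIV. cs a j)"
    and "(\<lambda>x. g (scl (cs a) x)) integrable_on rbox a"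
proof -
  have gi: "(g has_integral integral (cbox (-1) 1) g) (cbox (-1) (1::real^'N))"
    by (rule integrable_integral[OF integrable_continuous[OF continuous_on_subset[OF g]]]) auto
  have P: "(\<Prod>j\<in>UNIV. cs a j) > 0" by (rule prod_pos) (simp add: cs_pos)
  have "((\<lambda>x. g (scl (cs a) x)) has_integral integral (cbox (-1) 1) g /\<^sub>R \<bar>prod (cs a) UNIV\<bar>)
      (cbox (-(\<chi> j. inverse (cs a j))) (\<chi> j. inverse (cs a j)))"
    using has_integral_stretch_cart[OF gi, of "cs a"] cs_pos[of a] rbox_image[of a]
    unfolding scl_def by (simp add: less_imp_neq[symmetric])
  then have "((\<lambda>x. g (scl (cs a) x)) has_integral integral (cbox (-1) 1) g / (\<Prod>j\<in>UNIV. cs a j)) (rbox a)"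
    unfolding rbox_def has_integral_open_interval using P by (simp add: divide_inverse mult.commute)
  then show "integral (rbox a) (\<lambda>x. g (scl (cs a) x)) = integral (cbox (-1) 1) g / (\<Prod>j\<in>UNIV. cs a j)"
    and "(\<lambda>x. g (scl (cs a) x)) integrable_on rbox a"
    by (auto simp: integral_unique integrable_on_def)
qed


lemma rbox_cbox: "\<forall>j. a j \<ge> (1::nat) \<Longrightarrow> rbox a \<subseteq> cbox (-1) (1::real^'N::finite)"
  using rbox_sub box34_sub box_subset_cbox unfolding cubeQ_def by blast

lemma lower_bound:
  fixes a :: "'N::finite \<Rightarrow> nat"
    and idx :: "'m::finite \<Rightarrow> ('N \<Rightarrow> nat)"
    and F :: "real^'m^'n::finite \<Rightarrow> real"
    and p C q :: real
  assumes a_pos: "\<forall>j. a j \<ge> 1"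
    and idx_bij: "bij_betw idx UNIV (aidx a)"
    and p: "1 < p"
    and F_cont: "continuous_on UNIV F"
    and C: "0 < C"
    and F_growth: "\<forall>X. \<bar>F X\<bar> \<le> C * (norm X powr p + 1)"
    and q: "\<forall>v\<in>(Cc_inf :: (real^'N \<Rightarrow> real^'n) set). q \<le> (1 / measure lborel (cubeQ::(real^'N) set)) *
              (LINT x:cubeQ|lborel. F (X0 + grad_a idx v x))"
  shows "\<exists>C1. \<forall>X. \<forall>u\<in>(Cc_inf :: (real^'N \<Rightarrow> real^'n) set).
           - C1 * (norm X powr p + 1) \<le> (1 / measure lborel (cubeQ::(real^'N) set)) *
              (LINT x:cubeQ|lborel. F (X + grad_a idx u x))"
proof -
  obtain B where B0: "B \<ge> 0" and B: "\<forall>x\<in>cbox (-1) (1::real^'N). \<forall>k l. \<bar>mpartial (idx k) (E idx l) x\<bar> \<le> B"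
    using E_bound[of idx] by blast
  define K where "K = real (CARD('n) * CARD('m) * CARD('m)) * B"
  have K0: "K \<ge> 0" unfolding K_def using B0 by simp
  define P where "P = (\<Prod>j\<in>UNIV. cs a j)"
  have P0: "P > 0" unfolding P_def by (rule prod_pos) (simp add: cs_pos)
  define V where "V = measure lborel (cubeQ::(real^'N) set)"
  have V0: "V > 0" unfolding V_def by (rule V_pos)
  have Vc: "V = measure lborel (cbox (-1) (1::real^'N))" unfolding V_def by (rule V_eq)
  define \<alpha>0 where "\<alpha>0 = (1 + K) * norm X0"
  have \<alpha>00: "\<alpha>0 \<ge> 0" unfolding \<alpha>0_def using K0 by simp
  define C1 where "C1 = P * \<bar>q\<bar> + P * C * (2 powr p * \<alpha>0 powr p + 1) + P * C * 2 powr p * K powr p"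
  have main: "- C1 * (norm X powr p + 1) \<le> (1 / V) * (LINT x:cubeQ|lborel. F (X + grad_a idx u x))"
    if u: "u \<in> (Cc_inf :: (real^'N \<Rightarrow> real^'n) set)" for X u
  proof -
    define Y where "Y = X - X0"
    define \<phi> where "\<phi> = phi a idx Y u"
    have \<phi>in: "\<phi> \<in> Cc_inf" unfolding \<phi>_def by (rule phi_in[OF a_pos u])
    define g where "g = (\<lambda>y. F (X + grad_a idx u y))"
    define h where "h = (\<lambda>x. F (X0 + grad_a idx \<phi> x))"
    have gc: "continuous_on UNIV g" unfolding g_def
      by (rule continuous_on_compose2[OF F_cont]) (auto intro!: continuous_intros grad_cont[OF u])
    have hc: "continuous_on UNIV h" unfolding h_def
      by (rule continuous_on_compose2[OF F_cont]) (auto intro!: continuous_intros grad_cont[OF \<phi>in])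
    define M where "M = C * ((norm X0 + K * norm Y) powr p + 1)"
    have M0: "M \<ge> 0" unfolding M_def using C by simp
    define R where "R = (\<lambda>x. if x \<in> rbox a then g (scl (cs a) x) else 0)"
    have pw: "h x \<le> R x + M" if x: "x \<in> cbox (-1) (1::real^'N)" for x
    proof (cases "x \<in> rbox a")
      case True
      have "h x = g (scl (cs a) x)"
        unfolding h_def g_def \<phi>_def grad_inner[OF a_pos idx_bij u True] Y_def
        by (simp add: algebra_simps)
      then show ?thesis using True M0 by (simp add: R_def)
    next
      case False
      have ng: "norm (grad_a idx \<phi> x) \<le> K * norm Y"
        unfolding \<phi>_def grad_outer[OF u False] K_def
        by (rule mat_bound) (use B x in auto)
      have "norm (X0 + grad_a idx \<phi> x) \<le> norm X0 + K * norm Y"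
        using norm_triangle_ineq[of X0 "grad_a idx \<phi> x"] ng by linarith
      then have "norm (X0 + grad_a idx \<phi> x) powr p \<le> (norm X0 + K * norm Y) powr p"
        by (intro powr_mono2) (use p in auto)
      then have "h x \<le> M"
        unfolding h_def M_def using F_growth[rule_format, of "X0 + grad_a idx \<phi> x"] C
        by (smt (verit, best) mult_left_mono)
      then show ?thesis using False by (simp add: R_def)
    qed
    have Rint: "R integrable_on cbox (-1) 1"
    proof -
      have "rbox a \<inter> cbox (-1) 1 = rbox a" using rbox_cbox[OF a_pos] by blast
      then show ?thesis unfolding R_def integrable_restrict_Int using stretch_integral(2)[OF gc] by simp
    qed
    have RI: "integral (cbox (-1) 1) R = integral (cbox (-1) 1) g / P"
    proof -
      have "rbox a \<inter> cbox (-1) 1 = rbox a" using rbox_cbox[OF a_pos] by blast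
      then show ?thesis unfolding R_def integral_restrict_Int using stretch_integral(1)[OF gc] P_def by simp
    qed
    have hint: "h integrable_on cbox (-1) 1"
      by (rule integrable_continuous[OF continuous_on_subset[OF hc]]) auto
    have "integral (cbox (-1) 1) h \<le> integral (cbox (-1) 1) (\<lambda>x. R x + M)"
      by (rule integral_le[OF hint integrable_add[OF Rint integrable_const]]) (use pw in auto)
    also have "\<dots> = integral (cbox (-1) 1) g / P + M * V"
      using integral_add[OF Rint integrable_const[of M]] RI Vc by simp
    finally have I1: "integral (cbox (-1) 1) h \<le> integral (cbox (-1) 1) g / P + M * V" .
    have "q \<le> (1 / V) * integral (cbox (-1) 1) h"
      using q[rule_format, OF \<phi>in] LINT_eq[OF hc] unfolding V_def h_def by simp
    then have "q * V \<le> integral (cbox (-1) 1) h" using V0 by (simp add: field_simps)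
    then have "q * V \<le> integral (cbox (-1) 1) g / P + M * V" using I1 by linarith
    then have "(q - M) * V \<le> integral (cbox (-1) 1) g / P" by (simp add: algebra_simps)
    then have "P * (q - M) * V \<le> integral (cbox (-1) 1) g" using P0 by (simp add: field_simps)
    then have low: "P * (q - M) \<le> (1 / V) * (LINT x:cubeQ|lborel. F (X + grad_a idx u x))"
      using LINT_eq[OF gc] V0 unfolding g_def by (simp add: field_simps)
    have nY: "norm Y \<le> norm X + norm X0" unfolding Y_def by (rule norm_triangle_ineq4)
    have "norm X0 + K * norm Y \<le> \<alpha>0 + K * norm X"
      unfolding \<alpha>0_def using mult_left_mono[OF nY K0] by (simp add: algebra_simps)
    then have "(norm X0 + K * norm Y) powr p \<le> (\<alpha>0 + K * norm X) powr p"
      by (intro powr_mono2) (use p K0 in auto)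
    also have "\<dots> \<le> 2 powr p * (\<alpha>0 powr p + (K * norm X) powr p)"
      by (rule powr_sum_le) (use \<alpha>00 K0 p in auto)
    also have "(K * norm X) powr p = K powr p * norm X powr p"
      using K0 by (simp add: powr_mult)
    finally have Mb: "M \<le> C * (2 powr p * (\<alpha>0 powr p + K powr p * norm X powr p) + 1)"
      unfolding M_def using C by (simp add: mult_left_mono)
    have "- C1 * (norm X powr p + 1) \<le> P * (q - M)"
    proof -
      define T where "T = norm X powr p"
      define A0 where "A0 = P * \<bar>q\<bar> + P * C * (2 powr p * \<alpha>0 powr p + 1)"
      define A1 where "A1 = P * C * 2 powr p * K powr p"
      have T0: "T \<ge> 0" unfolding T_def by simp
      have A00: "A0 \<ge> 0" unfolding A0_def using P0 C by simp
      have A10: "A1 \<ge> 0" unfolding A1_def using P0 C by simp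
      have "P * M \<le> P * (C * (2 powr p * (\<alpha>0 powr p + K powr p * T) + 1))"
        using Mb P0 unfolding T_def by (simp add: mult_left_mono)
      also have "\<dots> = P * C * (2 powr p * \<alpha>0 powr p + 1) + A1 * T"
        unfolding A1_def by (simp add: algebra_simps)
      finally have e1: "P * M \<le> P * C * (2 powr p * \<alpha>0 powr p + 1) + A1 * T" .
      have e2: "- P * \<bar>q\<bar> \<le> P * q" using mult_left_mono[of "-\<bar>q\<bar>" q P] P0 by simp
      have e3: "- C1 * (T + 1) = - (A0 * T) - A0 - A1 * T - A1"
        unfolding C1_def A0_def A1_def by (simp add: algebra_simps)
      have e4: "A0 * T \<ge> 0" using A00 T0 by simp
      have e5: "P * (q - M) = P * q - P * M" by (simp add: algebra_simps)
      show ?thesis unfolding T_def[symmetric] using e1 e2 e3 e4 e5 A10 unfolding A0_def by linarith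
    qed
    with low show ?thesis by linarith
  qed
  show ?thesis unfolding V_def[symmetric] using main by blast
qed


theorem mainTheorem10:
  fixes a :: "'N::finite \<Rightarrow> nat"
    and idx :: "'m::finite \<Rightarrow> ('N \<Rightarrow> nat)"
    and F :: "real^'m^'n::finite \<Rightarrow> real"
    and p C :: real
  assumes a_pos: "\<forall>j. a j \<ge> 1"
    and idx_bij: "bij_betw idx UNIV (aidx a)"
    and p: "1 < p"
    and F_cont: "continuous_on UNIV F"
    and C: "0 < C"
    and F_growth: "\<forall>X. \<bar>F X\<bar> \<le> C * (norm X powr p + 1)"
  shows "(\<forall>X. QF idx F X = -\<infinity>) \<or>
         (\<exists>C'. \<forall>X. \<exists>r. QF idx F X = ereal r \<and> \<bar>r\<bar> \<le> C' * (norm X powr p + 1))"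
proof (cases "\<forall>X. QF idx F X = -\<infinity>")
  case True then show ?thesis by blast
next
  case False
  then obtain X0 where X0: "QF idx F X0 \<noteq> -\<infinity>" by blast
  define q where "q = real_of_ereal (QF idx F X0)"
  have "QF idx F X0 \<noteq> \<infinity>" using QF_le[of idx F X0] by auto
  then have Qq: "QF idx F X0 = ereal q" unfolding q_def using X0 by (cases "QF idx F X0") auto
  have qv: "\<forall>v\<in>(Cc_inf :: (real^'N \<Rightarrow> real^'n) set). q \<le> (1 / measure lborel (cubeQ::(real^'N) set)) *
              (LINT x:cubeQ|lborel. F (X0 + grad_a idx v x))"
  proof
    fix v :: "real^'N \<Rightarrow> real^'n" assume v: "v \<in> Cc_inf"
    have "ereal q \<le> ereal ((1 / measure lborel (cubeQ::(real^'N) set)) *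
              (LINT x:cubeQ|lborel. F (X0 + grad_a idx v x)))"
      unfolding Qq[symmetric] QF_def by (rule INF_lower[OF v])
    then show "q \<le> (1 / measure lborel (cubeQ::(real^'N) set)) * (LINT x:cubeQ|lborel. F (X0 + grad_a idx v x))"
      by simp
  qed
  obtain C1 where C1: "\<forall>X. \<forall>u\<in>(Cc_inf :: (real^'N \<Rightarrow> real^'n) set).
           - C1 * (norm X powr p + 1) \<le> (1 / measure lborel (cubeQ::(real^'N) set)) *
              (LINT x:cubeQ|lborel. F (X + grad_a idx u x))"
    using lower_bound[OF a_pos idx_bij p F_cont C F_growth qv] by blast
  have "\<forall>X. \<exists>r. QF idx F X = ereal r \<and> \<bar>r\<bar> \<le> max C C1 * (norm X powr p + 1)"
  proof
    fix X
    have lo: "ereal (- C1 * (norm X powr p + 1)) \<le> QF idx F X"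
      unfolding QF_def by (rule INF_greatest) (use C1 in simp)
    have hi: "QF idx F X \<le> ereal (F X)" by (rule QF_le)
    define r where "r = real_of_ereal (QF idx F X)"
    have Qr: "QF idx F X = ereal r" unfolding r_def using lo hi by (cases "QF idx F X") auto
    have np: "norm X powr p + 1 \<ge> 0" by (simp add: add_nonneg_nonneg)
    have "r \<le> F X" using hi Qr by simp
    also have "\<dots> \<le> C * (norm X powr p + 1)" using F_growth by (simp add: abs_le_iff)
    also have "\<dots> \<le> max C C1 * (norm X powr p + 1)" by (rule mult_right_mono[OF _ np]) simp
    finally have r1: "r \<le> max C C1 * (norm X powr p + 1)" .
    have "- (max C C1 * (norm X powr p + 1)) \<le> - C1 * (norm X powr p + 1)"
      using mult_right_mono[OF max.cobounded2[of C1 C] np] by simp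
    also have "\<dots> \<le> r" using lo Qr by simp
    finally have r2: "- (max C C1 * (norm X powr p + 1)) \<le> r" .
    show "\<exists>r. QF idx F X = ereal r \<and> \<bar>r\<bar> \<le> max C C1 * (norm X powr p + 1)"
      using Qr r1 r2 by (intro exI[of _ r]) (simp add: abs_le_iff)
  qed
  then show ?thesis by blast
qed

end
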